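(* Let $W(x)=(x^2-1)^2$ and let $u_0\in\mathcal V$ satisfy $(u_0)_i\ne0$ for all $i\in V$. For $\varepsilon>0$, let $u^\varepsilon(t)$ be the solution of $$\dot u_i=-(\Delta u)_i-\frac1\varepsilon d_i^{-r}W'(u_i)\ (t>0),\qquad u(0)=u_0.$$ Then there exists $\varepsilon_0>0$, depending only on the graph, on $r$ and on $u_0$, such that for every $\varepsilon\in(0,\varepsilon_0]$ and every $i\in V$, $\operatorname{sign}(u^\varepsilon_i(t))=\operatorname{sign}((u_0)_i)$ for all $t\ge0$.
   Context: $G=(V,E)$ is a finite undirected weighted graph with vertex set $V=\{1,\dots,n\}$. The weights satisfy $\omega_{ij}=\omega_{ji}\ge0$, with $\omega_{ij}>0$ iff $\{i,j\}\in E$, and $\omega_{ii}=0$. The degrees are $d_i=\sum_j\omega_{ij}>0$. A parameter $r\in[0,1]$ is fixed. $\mathcal V$ is the space of functions $V\to\mathbb R$. The graph Laplacian is $(\Delta u)_i=d_i^{-r}\sum_j\omega_{ij}(u_i-u_j)$. *)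

theory Defs
  imports "HOL-Analysis.Analysis"
begin

definition weighted_graph :: "nat \<Rightarrow> (nat \<Rightarrow> nat \<Rightarrow> real) \<Rightarrow> bool" where
  "weighted_graph n w \<longleftrightarrow>
     (\<forall>i\<in>{1..n}. \<forall>j\<in>{1..n}. w i j = w j i \<and> w i j \<ge> 0) \<and>
     (\<forall>i\<in>{1..n}. w i i = 0) \<and>
     (\<forall>i\<in>{1..n}. (\<Sum>j\<in>{1..n}. w i j) > 0)"

definition degree :: "nat \<Rightarrow> (nat \<Rightarrow> nat \<Rightarrow> real) \<Rightarrow> nat \<Rightarrow> real" where
  "degree n w i = (\<Sum>j\<in>{1..n}. w i j)"

definition graph_laplacian ::
  "nat \<Rightarrow> (nat \<Rightarrow> nat \<Rightarrow> real) \<Rightarrow> real \<Rightarrow> (nat \<Rightarrow> real) \<Rightarrow> nat \<Rightarrow> real" where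
  "graph_laplacian n w r u i =
     degree n w i powr (- r) * (\<Sum>j\<in>{1..n}. w i j * (u i - u j))"

definition W :: "real \<Rightarrow> real" where
  "W x = (x\<^sup>2 - 1)\<^sup>2"

definition is_AC_solution ::
  "nat \<Rightarrow> (nat \<Rightarrow> nat \<Rightarrow> real) \<Rightarrow> real \<Rightarrow> real \<Rightarrow> (nat \<Rightarrow> real) \<Rightarrow> (real \<Rightarrow> nat \<Rightarrow> real) \<Rightarrow> bool" where
  "is_AC_solution n w r \<epsilon> u0 u \<longleftrightarrow>
     (\<forall>i\<in>{1..n}. u 0 i = u0 i) \<and>
     (\<forall>i\<in>{1..n}. continuous_on {0..} (\<lambda>t. u t i)) \<and>
     (\<forall>t>0. \<forall>i\<in>{1..n}.
        ((\<lambda>s. u s i) has_real_derivative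
           (- graph_laplacian n w r (u t) i
            - (1 / \<epsilon>) * degree n w i powr (- r) * deriv W (u t i))) (at t))"

end

theory Submission imports Defs begin

lemma barrier:
  fixes f :: "nat \<Rightarrow> real \<Rightarrow> real" and D :: "nat \<Rightarrow> real \<Rightarrow> real"
  assumes fin: "finite I"
    and cont: "\<forall>j\<in>I. continuous_on {0..} (f j)"
    and init: "\<forall>j\<in>I. \<delta> < f j 0 \<and> f j 0 < M"
    and der: "\<forall>t>0. \<forall>j\<in>I. (f j has_real_derivative D j t) (at t)"
    and low: "\<forall>t>0. \<forall>i\<in>I. (\<forall>j\<in>I. \<delta> \<le> f j t \<and> f j t \<le> M) \<longrightarrow> f i t = \<delta> \<longrightarrow> D i t > 0"
    and up: "\<forall>t>0. \<forall>i\<in>I. (\<forall>j\<in>I. \<delta> \<le> f j t \<and> f j t \<le> M) \<longrightarrow> f i t = M \<longrightarrow> D i t < 0"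
  shows "\<forall>t\<ge>0. \<forall>j\<in>I. \<delta> < f j t \<and> f j t < M"
proof (rule ccontr)
  define S where "S = (\<Union>j\<in>I. {t\<in>{0..}. f j t \<le> \<delta>} \<union> {t\<in>{0..}. M \<le> f j t})"
  assume "\<not> ?thesis"
  then obtain t0 j0 where t0: "t0 \<ge> 0" "j0 \<in> I" "\<not> (\<delta> < f j0 t0 \<and> f j0 t0 < M)" by auto
  have t0S: "t0 \<in> S" using t0 unfolding S_def by (force simp: not_less)
  have closedS: "closed S" unfolding S_def
  proof (intro closed_UN fin ballI closed_Un)
    fix j assume j: "j \<in> I"
    show "closed {t\<in>{0..}. f j t \<le> \<delta>}"
      by (rule continuous_on_closed_Collect_le) (use cont j in auto)
    show "closed {t\<in>{0..}. M \<le> f j t}"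
      by (rule continuous_on_closed_Collect_le) (use cont j in auto)
  qed
  have bdd: "bdd_below S" unfolding S_def bdd_below_def by auto
  define T where "T = Inf S"
  have TS: "T \<in> S" unfolding T_def using closed_contains_Inf[OF _ bdd closedS] t0S by blast
  have T0: "T \<ge> 0" using TS unfolding S_def by auto
  have before: "\<forall>j\<in>I. \<delta> < f j t \<and> f j t < M" if "0 \<le> t" "t < T" for t
  proof -
    have "t \<notin> S" using that cInf_lower[OF _ bdd] unfolding T_def by force
    thus ?thesis using that unfolding S_def by auto
  qed
  have "T \<noteq> 0" using TS init unfolding S_def by auto
  hence Tpos: "T > 0" using T0 by auto
  have bounds: "\<delta> \<le> f j T \<and> f j T \<le> M" if j: "j \<in> I" for j
  proof -
    have "isCont (f j) T" using der Tpos j DERIV_isCont by blast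
    hence lim: "(f j \<longlongrightarrow> f j T) (at_left T)"
      by (simp add: isCont_def filterlim_at_split)
    have ev: "eventually (\<lambda>t. \<delta> < f j t \<and> f j t < M) (at_left T)"
      using eventually_at_left_real[OF Tpos] by eventually_elim (use before j in auto)
    have "\<delta> \<le> f j T"
      by (rule tendsto_lowerbound[OF lim]) (use ev in \<open>auto elim: eventually_mono\<close>)
    moreover have "f j T \<le> M"
      by (rule tendsto_upperbound[OF lim]) (use ev in \<open>auto elim: eventually_mono\<close>)
    ultimately show ?thesis by auto
  qed
  obtain i where i: "i \<in> I" "f i T \<le> \<delta> \<or> M \<le> f i T" using TS unfolding S_def by auto
  have dT: "(f i has_real_derivative D i T) (at T)" using der Tpos i by blast
  show False
  proof (cases "f i T \<le> \<delta>")
    case True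
    hence eq: "f i T = \<delta>" using bounds[OF i(1)] by auto
    have "D i T > 0" using low Tpos i(1) bounds eq by blast
    then obtain d where d: "d > 0" "\<forall>h>0. h < d \<longrightarrow> f i (T - h) < f i T"
      using DERIV_pos_inc_left[OF dT] by blast
    define h where "h = min (d/2) (T/2)"
    have "h > 0" "h < d" "T - h \<ge> 0" "T - h < T" using d Tpos unfolding h_def by auto
    thus False using d before[of "T-h"] i(1) eq by fastforce
  next
    case False
    hence eq: "f i T = M" using bounds[OF i(1)] i(2) by auto
    have "D i T < 0" using up Tpos i(1) bounds eq by blast
    then obtain d where d: "d > 0" "\<forall>h>0. h < d \<longrightarrow> f i T < f i (T - h)"
      using DERIV_neg_dec_left[OF dT] by blast
    define h where "h = min (d/2) (T/2)"
    have "h > 0" "h < d" "T - h \<ge> 0" "T - h < T" using d Tpos unfolding h_def by auto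
    thus False using d before[of "T-h"] i(1) eq by fastforce
  qed
qed

lemma W_deriv: "deriv W x = 4 * x * (x^2 - 1)"
proof -
  have "(W has_real_derivative 2 * (x^2 - 1) * (2 * x)) (at x)"
    unfolding W_def[abs_def] by (auto intro!: derivative_eq_intros)
  thus ?thesis by (simp add: DERIV_imp_deriv algebra_simps)
qed

lemma low_arith:
  fixes p d Dt \<delta> M \<epsilon> S :: real
  assumes "p > 0" "0 < \<delta>" "\<delta> \<le> 1/2" "M > 0" "\<epsilon> > 0" "\<epsilon> * (Dt * (\<delta> + M)) \<le> \<delta>"
    "d < Dt" "S \<le> d * (\<delta> + M)" "Dt > 0"
  shows "- p * S - (1/\<epsilon>) * p * (4 * \<delta> * (\<delta>^2 - 1)) > 0"
proof -
  have "\<delta>*\<delta> \<le> (1/2)*(1/2)" by (rule mult_mono) (use assms(2,3) in auto)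
  hence "\<delta>^2 \<le> 1/4" by (simp add: power2_eq_square)
  hence "\<delta> * \<delta>^2 \<le> \<delta> * (1/4)" using assms(2) by (intro mult_left_mono) auto
  moreover have "4 * \<delta> * (1 - \<delta>^2) = 4 * \<delta> - 4 * (\<delta> * \<delta>^2)" by (simp add: algebra_simps)
  ultimately have a: "4 * \<delta> * (1 - \<delta>^2) \<ge> 3 * \<delta>" by linarith
  have "Dt*(\<delta>+M) \<le> \<delta>/\<epsilon>" using assms(5,6) by (subst pos_le_divide_eq) (auto simp: mult.commute)
  moreover have "3 * \<delta> / \<epsilon> = 3 * (\<delta>/\<epsilon>)" by simp
  ultimately have b: "3 * \<delta> / \<epsilon> \<ge> 3 * (Dt * (\<delta> + M))" by linarith
  have c: "d * (\<delta> + M) < Dt * (\<delta> + M)" using assms(2,4,7) by simp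
  have "(4 * \<delta> * (1 - \<delta>^2)) / \<epsilon> \<ge> 3 * \<delta> / \<epsilon>" using a assms(5) by (simp add: divide_right_mono)
  moreover have "Dt * (\<delta> + M) > 0" using assms(2,4,9) by simp
  ultimately have "(4 * \<delta> * (1 - \<delta>^2)) / \<epsilon> > S" using b c assms(8) by linarith
  hence pos: "p * ((4 * \<delta> * (1 - \<delta>^2)) / \<epsilon> - S) > 0" using assms(1) by simp
  have "- (1/\<epsilon>) * p * (4 * \<delta> * (\<delta>^2 - 1)) = p * ((4 * \<delta> * (1 - \<delta>^2)) / \<epsilon>)"
    using assms(5) by (simp add: field_simps)
  hence "- p * S - (1/\<epsilon>) * p * (4 * \<delta> * (\<delta>^2 - 1)) = p * ((4 * \<delta> * (1 - \<delta>^2)) / \<epsilon> - S)"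
    by (simp add: algebra_simps)
  thus ?thesis using pos by simp
qed

lemma up_arith:
  fixes p M \<epsilon> S :: real
  assumes "p > 0" "M \<ge> 2" "\<epsilon> > 0" "S \<ge> 0"
  shows "- p * S - (1/\<epsilon>) * p * (4 * M * (M^2 - 1)) < 0"
proof -
  have "2*2 \<le> M*M" by (rule mult_mono) (use assms(2) in auto)
  hence "M^2 \<ge> 4" by (simp add: power2_eq_square)
  hence "4 * M * (M^2 - 1) > 0" using assms(2) by simp
  hence "(1/\<epsilon>) * p * (4 * M * (M^2 - 1)) > 0" using assms by simp
  moreover have "p * S \<ge> 0" using assms by simp
  ultimately show ?thesis by simp
qed

theorem mainTheorem17:
  fixes n :: nat and w :: "nat \<Rightarrow> nat \<Rightarrow> real" and r :: real and u0 :: "nat \<Rightarrow> real"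
  assumes "weighted_graph n w"
    and "0 \<le> r" and "r \<le> 1"
    and "\<forall>i\<in>{1..n}. u0 i \<noteq> 0"
  shows "\<exists>\<epsilon>0>0. \<forall>\<epsilon>. 0 < \<epsilon> \<and> \<epsilon> \<le> \<epsilon>0 \<longrightarrow>
           (\<forall>u. is_AC_solution n w r \<epsilon> u0 u \<longrightarrow>
              (\<forall>i\<in>{1..n}. \<forall>t\<ge>0. sgn (u t i) = sgn (u0 i)))"
proof -
  note wg = assms(1)[unfolded weighted_graph_def]
  have dpos: "degree n w i > 0" if "i \<in> {1..n}" for i
    using wg that unfolding degree_def by blast
  define m where "m = Min (insert 1 ((\<lambda>j. \<bar>u0 j\<bar>) ` {1..n}))"
  have mpos: "m > 0" unfolding m_def using assms(4) by (subst Min_gr_iff) auto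
  have m1: "m \<le> 1" unfolding m_def by (rule Min_le) auto
  have mle: "m \<le> \<bar>u0 j\<bar>" if "j \<in> {1..n}" for j unfolding m_def by (rule Min_le) (use that in auto)
  define \<delta> where "\<delta> = m / 2"
  define M where "M = 2 + (\<Sum>j\<in>{1..n}. \<bar>u0 j\<bar>)"
  define Dt where "Dt = 1 + (\<Sum>k\<in>{1..n}. degree n w k)"
  have \<delta>pos: "\<delta> > 0" and \<delta>half: "\<delta> \<le> 1/2" using mpos m1 unfolding \<delta>_def by auto
  have M2: "M \<ge> 2" unfolding M_def by (simp add: sum_nonneg)
  have Mgt: "\<bar>u0 j\<bar> < M" if "j \<in> {1..n}" for j
  proof -
    have "\<bar>u0 j\<bar> \<le> (\<Sum>j\<in>{1..n}. \<bar>u0 j\<bar>)" by (rule member_le_sum) (use that in auto)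
    thus ?thesis unfolding M_def by simp
  qed
  have dlt: "degree n w i < Dt" if "i \<in> {1..n}" for i
  proof -
    have "degree n w i \<le> (\<Sum>k\<in>{1..n}. degree n w k)"
      by (rule member_le_sum) (use that dpos in \<open>auto simp: less_imp_le\<close>)
    thus ?thesis unfolding Dt_def by simp
  qed
  have Dtpos: "Dt > 0" unfolding Dt_def using dpos by (smt (verit) sum_nonneg)
  define \<epsilon>0 where "\<epsilon>0 = \<delta> / (Dt * (\<delta> + M))"
  have e0pos: "\<epsilon>0 > 0" unfolding \<epsilon>0_def using \<delta>pos M2 Dtpos by simp
  show ?thesis
  proof (intro exI[of _ \<epsilon>0] conjI e0pos allI impI ballI)
    fix \<epsilon> u i t assume e: "0 < \<epsilon> \<and> \<epsilon> \<le> \<epsilon>0" and sol: "is_AC_solution n w r \<epsilon> u0 u"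
      and i: "i \<in> {1..n}" and t: "(t::real) \<ge> 0"
    have eb: "\<epsilon> * (Dt * (\<delta> + M)) \<le> \<delta>" using e Dtpos \<delta>pos M2
      unfolding \<epsilon>0_def by (simp add: pos_le_divide_eq)
    note solD = sol[unfolded is_AC_solution_def]
    define s where "s j = sgn (u0 j)" for j
    have s2: "s j * s j = 1" if "j \<in> {1..n}" for j
      using assms(4) that unfolding s_def by (auto simp: sgn_real_def)
    define f where "f j t = s j * u t j" for j t
    define D where "D j t = s j * (- graph_laplacian n w r (u t) j
            - (1 / \<epsilon>) * degree n w j powr (- r) * deriv W (u t j))" for j t
    have common: "s i * graph_laplacian n w r (u t) i = degree n w i powr (- r) * (\<Sum>j\<in>{1..n}. w i j * (f i t - s i * u t j))
         \<and> s i * deriv W (u t i) = 4 * f i t * ((f i t)^2 - 1)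
         \<and> (\<forall>j\<in>{1..n}. \<bar>s i * u t j\<bar> = \<bar>f j t\<bar>)"
      if i: "i \<in> {1..n}" for i t
    proof (intro conjI ballI)
      show "s i * graph_laplacian n w r (u t) i = degree n w i powr (- r) * (\<Sum>j\<in>{1..n}. w i j * (f i t - s i * u t j))"
        unfolding graph_laplacian_def f_def by (simp add: sum_distrib_left algebra_simps)
      have "(f i t)^2 = (u t i)^2" unfolding f_def using s2[OF i] by (simp add: power2_eq_square algebra_simps)
      thus "s i * deriv W (u t i) = 4 * f i t * ((f i t)^2 - 1)" unfolding W_deriv f_def
        by (simp add: algebra_simps)
      fix j assume j: "j \<in> {1..n}"
      have "\<bar>s i\<bar> = 1" "\<bar>s j\<bar> = 1" using assms(4) i j unfolding s_def by (auto simp: sgn_real_def)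
      thus "\<bar>s i * u t j\<bar> = \<bar>f j t\<bar>" unfolding f_def by (simp add: abs_mult)
    qed
    have key: "\<forall>t\<ge>0. \<forall>j\<in>{1..n}. \<delta> < f j t \<and> f j t < M"
    proof (rule barrier)
      show "finite {1..n}" by simp
      show "\<forall>j\<in>{1..n}. continuous_on {0..} (f j)"
        unfolding f_def using solD by (simp add: continuous_on_mult_left)
      show "\<forall>j\<in>{1..n}. \<delta> < f j 0 \<and> f j 0 < M"
      proof
        fix j assume j: "j \<in> {1..n}"
        have "f j 0 = \<bar>u0 j\<bar>" unfolding f_def s_def using solD j by (simp add: sgn_mult_abs abs_sgn)
        thus "\<delta> < f j 0 \<and> f j 0 < M" using mle[OF j] Mgt[OF j] mpos unfolding \<delta>_def by simp
      qed
      show "\<forall>t>0. \<forall>j\<in>{1..n}. (f j has_real_derivative D j t) (at t)"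
        unfolding f_def D_def using solD by (auto intro!: DERIV_cmult)
      show "\<forall>t>0. \<forall>i\<in>{1..n}. (\<forall>j\<in>{1..n}. \<delta> \<le> f j t \<and> f j t \<le> M) \<longrightarrow> f i t = \<delta> \<longrightarrow> D i t > 0"
      proof (intro allI impI ballI)
        fix t i assume "(t::real) > 0" and i: "i \<in> {1..n}" and bnd: "\<forall>j\<in>{1..n}. \<delta> \<le> f j t \<and> f j t \<le> M" and eq: "f i t = \<delta>"
        note c = common[OF i, of t]
        have p: "degree n w i powr (- r) > 0" using dpos[OF i] by simp
        have "(\<Sum>j\<in>{1..n}. w i j * (f i t - s i * u t j)) \<le> (\<Sum>j\<in>{1..n}. w i j * (\<delta> + M))"
        proof (rule sum_mono)
          fix j assume j: "j \<in> {1..n}"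
          have "\<bar>s i * u t j\<bar> \<le> M" using c j bnd \<delta>pos by force
          hence "f i t - s i * u t j \<le> \<delta> + M" using eq by linarith
          thus "w i j * (f i t - s i * u t j) \<le> w i j * (\<delta> + M)" using wg i j by (simp add: mult_left_mono)
        qed
        also have "\<dots> = degree n w i * (\<delta> + M)" unfolding degree_def by (simp add: sum_distrib_right)
        finally have S: "(\<Sum>j\<in>{1..n}. w i j * (f i t - s i * u t j)) \<le> degree n w i * (\<delta> + M)" .
        have "D i t = - (s i * graph_laplacian n w r (u t) i) - (1/\<epsilon>) * degree n w i powr (- r) * (s i * deriv W (u t i))"
          unfolding D_def by (simp add: algebra_simps)
        also have "\<dots> = - (degree n w i powr (- r)) * (\<Sum>j\<in>{1..n}. w i j * (f i t - s i * u t j))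
             - (1/\<epsilon>) * degree n w i powr (- r) * (4 * \<delta> * (\<delta>^2 - 1))"
          by (simp only: c[THEN conjunct1] c[THEN conjunct2, THEN conjunct1] eq)
        also have "\<dots> > 0" by (rule low_arith[OF p \<delta>pos \<delta>half _ _ eb dlt[OF i] S]) (use M2 e Dtpos in auto)
        finally show "D i t > 0" .
      qed
      show "\<forall>t>0. \<forall>i\<in>{1..n}. (\<forall>j\<in>{1..n}. \<delta> \<le> f j t \<and> f j t \<le> M) \<longrightarrow> f i t = M \<longrightarrow> D i t < 0"
      proof (intro allI impI ballI)
        fix t i assume "(t::real) > 0" and i: "i \<in> {1..n}" and bnd: "\<forall>j\<in>{1..n}. \<delta> \<le> f j t \<and> f j t \<le> M" and eq: "f i t = M"
        note c = common[OF i, of t]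
        have p: "degree n w i powr (- r) > 0" using dpos[OF i] by simp
        have S: "(\<Sum>j\<in>{1..n}. w i j * (f i t - s i * u t j)) \<ge> 0"
        proof (rule sum_nonneg)
          fix j assume j: "j \<in> {1..n}"
          have "\<bar>s i * u t j\<bar> \<le> M" using c j bnd \<delta>pos by force
          hence "f i t - s i * u t j \<ge> 0" using eq by linarith
          thus "w i j * (f i t - s i * u t j) \<ge> 0" using wg i j by simp
        qed
        have "D i t = - (s i * graph_laplacian n w r (u t) i) - (1/\<epsilon>) * degree n w i powr (- r) * (s i * deriv W (u t i))"
          unfolding D_def by (simp add: algebra_simps)
        also have "\<dots> = - (degree n w i powr (- r)) * (\<Sum>j\<in>{1..n}. w i j * (f i t - s i * u t j))
             - (1/\<epsilon>) * degree n w i powr (- r) * (4 * M * (M^2 - 1))"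
          by (simp only: c[THEN conjunct1] c[THEN conjunct2, THEN conjunct1] eq)
        also have "\<dots> < 0" by (rule up_arith[OF p M2 _ S]) (use e in auto)
        finally show "D i t < 0" .
      qed
    qed
    have "s i * u t i > 0" using key t i \<delta>pos unfolding f_def by force
    thus "sgn (u t i) = sgn (u0 i)" unfolding s_def using assms(4) i
      by (auto simp: sgn_real_def split: if_splits)
  qed
qed

end
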